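(* For every $\epsilon>0$ there is $\epsilon'>0$ depending only on $\epsilon$ such that for every $f:\{0,1\}^n\to\{-1,1\}$ with $\|f\|_{U_3}\ge\epsilon$, $$\mathbb E_{x,y}\sum_{\alpha,\beta}\hat{f_x}^2(\alpha)\,\hat{f_y}^2(\beta)\,\widehat{f_{x+y}}^2(\alpha+\beta)\ge\epsilon'.$$
   Context: $\{0,1\}^n$ is identified with $\mathbb F_2^n$; $x,y$ independent uniform. $\hat h(\alpha)=\mathbb E_z h(z)(-1)^{\langle\alpha,z\rangle}$; $f_y(x)=f(x)f(x+y)$. $\|f\|_{U_3}=\big[\mathbb E_{x,y_1,y_2,y_3}\prod_{S\subseteq[3]} f(x+\sum_{i\in S}y_i)\big]^{1/8}$. *)

theory Defs
  imports Complex_Main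
begin

text \<open>F_2^n is represented by boolean lists of length n; addition is pointwise xor.\<close>

definition cube :: "nat \<Rightarrow> bool list set" where
  "cube n = {xs. length xs = n}"

definition vadd :: "bool list \<Rightarrow> bool list \<Rightarrow> bool list" where
  "vadd xs ys = map2 (\<noteq>) xs ys"

text \<open>Inner product over F_2, returned as the number of common ones (its parity matters).\<close>
definition ip :: "bool list \<Rightarrow> bool list \<Rightarrow> nat" where
  "ip xs ys = length (filter id (map2 (\<and>) xs ys))"

definition expect :: "nat \<Rightarrow> (bool list \<Rightarrow> real) \<Rightarrow> real" where
  "expect n g = (\<Sum>x\<in>cube n. g x) / 2 ^ n"

definition fourier :: "nat \<Rightarrow> (bool list \<Rightarrow> real) \<Rightarrow> bool list \<Rightarrow> real" where
  "fourier n h a = expect n (\<lambda>z. h z * (-1) ^ ip a z)"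

definition fder :: "(bool list \<Rightarrow> real) \<Rightarrow> bool list \<Rightarrow> bool list \<Rightarrow> real" where
  "fder f y = (\<lambda>x. f x * f (vadd x y))"

definition u3norm :: "nat \<Rightarrow> (bool list \<Rightarrow> real) \<Rightarrow> real" where
  "u3norm n f = root 8 (expect n (\<lambda>x. expect n (\<lambda>y1. expect n (\<lambda>y2. expect n (\<lambda>y3.
      f x * f (vadd x y1) * f (vadd x y2) * f (vadd x y3)
      * f (vadd (vadd x y1) y2) * f (vadd (vadd x y1) y3) * f (vadd (vadd x y2) y3)
      * f (vadd (vadd (vadd x y1) y2) y3))))))"

end

theory Submission
  imports Defs
begin



lemma vadd_comm: "vadd x y = vadd y x"
  unfolding vadd_def
proof (induction x arbitrary: y)
  case Nil then show ?case by simp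
next
  case (Cons a x) then show ?case by (cases y) auto
qed

lemma vadd_assoc: "vadd (vadd x y) z = vadd x (vadd y z)"
  unfolding vadd_def
proof (induction x arbitrary: y z)
  case Nil then show ?case by simp
next
  case (Cons a x) then show ?case by (cases y; cases z) auto
qed

lemma vadd_lcomm: "vadd x (vadd y z) = vadd y (vadd x z)"
  by (metis vadd_assoc vadd_comm)

lemmas vadd_ac = vadd_assoc vadd_comm vadd_lcomm

lemma length_vadd[simp]: "length (vadd x y) = min (length x) (length y)"
  by (simp add: vadd_def)

lemma vadd_cancel: "length x \<le> length c \<Longrightarrow> vadd (vadd x c) c = x"
  unfolding vadd_def
proof (induction x arbitrary: c)
  case Nil then show ?case by simp
next
  case (Cons a x) then show ?case by (cases c) auto
qed

lemma cube_iff: "x \<in> cube n \<longleftrightarrow> length x = n" by (simp add: cube_def)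

lemma vadd_cube[intro]: "x \<in> cube n \<Longrightarrow> y \<in> cube n \<Longrightarrow> vadd x y \<in> cube n"
  by (simp add: cube_def)

lemma finite_cube[simp]: "finite (cube n)"
proof -
  have "cube n = {xs. set xs \<subseteq> (UNIV::bool set) \<and> length xs = n}" by (auto simp: cube_def)
  then show ?thesis using finite_lists_length_eq[of "UNIV::bool set" n] by simp
qed

lemma card_cube[simp]: "card (cube n) = 2 ^ n"
proof -
  have "cube n = {xs. set xs \<subseteq> (UNIV::bool set) \<and> length xs = n}" by (auto simp: cube_def)
  then show ?thesis using card_lists_length_eq[of "UNIV::bool set" n] by simp
qed

definition chr :: "bool list \<Rightarrow> bool list \<Rightarrow> real" where
  "chr a z = (-1::real) ^ ip a z"

lemma ip_Nil[simp]: "ip [] z = 0" "ip a [] = 0" by (simp_all add: ip_def)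
lemma ip_Cons[simp]: "ip (x # xs) (y # ys) = (if x \<and> y then Suc (ip xs ys) else ip xs ys)"
  by (simp add: ip_def)
lemma vadd_Cons[simp]: "vadd (x # xs) (y # ys) = (x \<noteq> y) # vadd xs ys" "vadd [] ys = []" "vadd xs [] = []"
  by (simp_all add: vadd_def)

lemma ip_comm: "ip a z = ip z a"
proof (induction a arbitrary: z)
  case Nil then show ?case by simp
next
  case (Cons c x) then show ?case by (cases z) auto
qed

lemma chr_comm: "chr a z = chr z a" by (simp add: chr_def ip_comm)

lemma chr_sq: "chr a z * chr a z = 1"
  by (simp add: chr_def flip: power_add)

lemma chr_add: "length z = length w \<Longrightarrow> chr a (vadd z w) = chr a z * chr a w"
  unfolding chr_def
proof (induction a arbitrary: z w)
  case Nil then show ?case by simp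
next
  case (Cons c x) then show ?case
    by (cases z; cases w) (auto simp: power_add)
qed

lemma cube_Suc: "cube (Suc n) = Cons True ` cube n \<union> Cons False ` cube n"
  unfolding cube_def
  by (auto simp: length_Suc_conv)

lemma sum_cube_Suc: "(\<Sum>x\<in>cube (Suc n). g x) = (\<Sum>a\<in>cube n. g (True # a)) + (\<Sum>a\<in>cube n. g (False # a))"
  unfolding cube_Suc
  by (subst sum.union_disjoint) (auto simp: sum.reindex)

lemma chr_sum: "z \<in> cube n \<Longrightarrow> (\<Sum>a\<in>cube n. chr a z) = (if z = replicate n False then 2 ^ n else 0)"
proof (induction n arbitrary: z)
  case 0 then show ?case by (simp add: cube_def chr_def ip_def)
next
  case (Suc n)
  then obtain b z' where z: "z = b # z'" "z' \<in> cube n" by (cases z) (auto simp: cube_def)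
  have "(\<Sum>a\<in>cube (Suc n). chr a z) = (\<Sum>a\<in>cube n. chr (True # a) z) + (\<Sum>a\<in>cube n. chr (False # a) z)"
    by (rule sum_cube_Suc)
  also have "\<dots> = (if b then 0 else 2 * (\<Sum>a\<in>cube n. chr a z'))"
    by (auto simp: z chr_def sum.distrib[symmetric] sum_distrib_left)
  finally show ?case using Suc.IH[OF z(2)] z by auto
qed



lemma expect_cong: "(\<And>x. x \<in> cube n \<Longrightarrow> g x = h x) \<Longrightarrow> expect n g = expect n h"
  unfolding expect_def by (metis sum.cong)

lemma expect_swap: "expect n (\<lambda>x. expect n (\<lambda>y. g x y)) = expect n (\<lambda>y. expect n (\<lambda>x. g x y))"
  unfolding expect_def sum_divide_distrib[symmetric] by (subst sum.swap) simp

lemma expect_cmult: "expect n (\<lambda>x. c * g x) = c * expect n g"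
  unfolding expect_def by (simp add: sum_distrib_left)

lemma expect_multc: "expect n (\<lambda>x. g x * c) = expect n g * c"
  unfolding expect_def by (simp add: sum_distrib_right)

lemma expect_sum: "expect n (\<lambda>x. \<Sum>a\<in>A. g a x) = (\<Sum>a\<in>A. expect n (g a))"
  unfolding expect_def by (subst sum.swap) (simp add: sum_divide_distrib)

lemma expect_translate:
  assumes c: "c \<in> cube n"
  shows "expect n (\<lambda>x. g (vadd x c)) = expect n g"
  unfolding expect_def
proof -
  have "(\<Sum>x\<in>cube n. g (vadd x c)) = (\<Sum>x\<in>cube n. g x)"
    by (rule sum.reindex_bij_witness[where i="\<lambda>x. vadd x c" and j="\<lambda>x. vadd x c"])
       (use c in \<open>auto simp: vadd_cancel cube_iff\<close>)
  then show "(\<Sum>x\<in>cube n. g (vadd x c)) / 2 ^ n = (\<Sum>x\<in>cube n. g x) / 2 ^ n" by simp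
qed

lemma expect_one: "expect n (\<lambda>x. 1) = 1"
  unfolding expect_def by simp

lemma fourier_chr: "fourier n h a = expect n (\<lambda>z. h z * chr a z)"
  by (simp add: fourier_def chr_def)

lemma vadd_zero_iff: "z \<in> cube n \<Longrightarrow> w \<in> cube n \<Longrightarrow> vadd z w = replicate n False \<longleftrightarrow> z = w"
  unfolding cube_iff
proof (induction z arbitrary: w n)
  case Nil then show ?case by simp
next
  case (Cons a z) then show ?case by (cases w; cases n) auto
qed

lemma fourier_inv:
  assumes w: "w \<in> cube n"
  shows "(\<Sum>a\<in>cube n. fourier n h a * chr a w) = h w"
proof -
  have "(\<Sum>a\<in>cube n. fourier n h a * chr a w)
      = (\<Sum>a\<in>cube n. \<Sum>z\<in>cube n. h z * chr a (vadd z w) / 2 ^ n)"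
    unfolding fourier_chr expect_def sum_divide_distrib sum_distrib_right
    by (intro sum.cong refl) (use w in \<open>auto simp: chr_add cube_iff\<close>)
  also have "\<dots> = (\<Sum>z\<in>cube n. h z / 2 ^ n * (\<Sum>a\<in>cube n. chr a (vadd z w)))"
    by (subst sum.swap) (simp add: sum_distrib_left)
  also have "\<dots> = (\<Sum>z\<in>cube n. if z = w then h w else 0)"
  proof (intro sum.cong refl)
    fix z assume z: "z \<in> cube n"
    then have "vadd z w \<in> cube n" using w by auto
    then show "h z / 2 ^ n * (\<Sum>a\<in>cube n. chr a (vadd z w)) = (if z = w then h w else 0)"
      using z w by (simp add: chr_sum vadd_zero_iff)
  qed
  also have "\<dots> = h w" using w by simp
  finally show ?thesis .
qed

lemma parseval:
  "(\<Sum>a\<in>cube n. fourier n h1 a * fourier n h2 a) = expect n (\<lambda>z. h1 z * h2 z)"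
proof -
  have "(\<Sum>a\<in>cube n. fourier n h1 a * fourier n h2 a)
     = (\<Sum>a\<in>cube n. expect n (\<lambda>z. h2 z * (fourier n h1 a * chr a z)))"
    unfolding fourier_chr[of n h2] expect_cmult[symmetric]
    by (simp add: mult_ac)
  also have "\<dots> = expect n (\<lambda>z. h2 z * (\<Sum>a\<in>cube n. fourier n h1 a * chr a z))"
    by (simp add: expect_sum sum_distrib_left)
  also have "\<dots> = expect n (\<lambda>z. h1 z * h2 z)"
    by (rule expect_cong) (simp add: fourier_inv)
  finally show ?thesis .
qed

definition acorr :: "nat \<Rightarrow> (bool list \<Rightarrow> real) \<Rightarrow> bool list \<Rightarrow> real" where
  "acorr n g w = expect n (\<lambda>z. g z * g (vadd z w))"

lemma fourier_sq:
  "fourier n g a ^ 2 = fourier n (acorr n g) a"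
proof -
  have "fourier n g a ^ 2 = expect n (\<lambda>z. g z * chr a z * fourier n g a)"
    by (simp add: power2_eq_square expect_multc fourier_chr)
  also have "\<dots> = expect n (\<lambda>z. expect n (\<lambda>w. g z * g (vadd z w) * chr a w))"
  proof (rule expect_cong)
    fix z assume z: "z \<in> cube n"
    have "fourier n g a = expect n (\<lambda>w. g (vadd w z) * chr a (vadd w z))"
      unfolding fourier_chr by (rule expect_translate[OF z, symmetric])
    also have "\<dots> = expect n (\<lambda>w. g (vadd z w) * chr a w * chr a z)"
      by (rule expect_cong) (use z in \<open>auto simp: chr_add cube_iff vadd_comm\<close>)
    finally have "g z * chr a z * fourier n g a
       = expect n (\<lambda>w. g z * g (vadd z w) * chr a w * (chr a z * chr a z))"
      by (simp add: expect_cmult[symmetric] mult_ac)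
    then show "g z * chr a z * fourier n g a = expect n (\<lambda>w. g z * g (vadd z w) * chr a w)"
      by (simp add: chr_sq)
  qed
  also have "\<dots> = fourier n (acorr n g) a"
    unfolding fourier_chr acorr_def
    by (subst expect_swap) (simp add: expect_multc)
  finally show ?thesis .
qed

lemma chr_vadd_left: "w \<in> cube n \<Longrightarrow> \<alpha> \<in> cube n \<Longrightarrow> \<beta> \<in> cube n \<Longrightarrow>
  chr (vadd \<alpha> \<beta>) w = chr \<alpha> w * chr \<beta> w"
  by (metis chr_add chr_comm cube_iff)

lemma fourier_shift:
  "\<alpha> \<in> cube n \<Longrightarrow> \<beta> \<in> cube n \<Longrightarrow>
   fourier n h (vadd \<alpha> \<beta>) = fourier n (\<lambda>w. h w * chr \<alpha> w) \<beta>"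
  unfolding fourier_chr by (rule expect_cong) (simp add: chr_vadd_left mult_ac)

lemma fourier_translate:
  assumes c: "c \<in> cube n" and g: "\<gamma> \<in> cube n"
  shows "fourier n (\<lambda>y. h (vadd y c)) \<gamma> = chr \<gamma> c * fourier n h \<gamma>"
proof -
  have "fourier n (\<lambda>y. h (vadd y c)) \<gamma> = expect n (\<lambda>y. h (vadd y c) * chr \<gamma> (vadd y c) * chr \<gamma> c)"
    unfolding fourier_chr
    by (rule expect_cong) (use c in \<open>auto simp: chr_add cube_iff mult_ac chr_sq\<close>)
  also have "\<dots> = chr \<gamma> c * fourier n h \<gamma>"
    unfolding fourier_chr expect_multc expect_translate[OF c, where g="\<lambda>y. h y * chr \<gamma> y"]
    by simp
  finally show ?thesis .
qed



lemma triple: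
  "(\<Sum>\<alpha>\<in>cube n. \<Sum>\<beta>\<in>cube n. fourier n h1 \<alpha> * fourier n h2 \<beta> * fourier n h3 (vadd \<alpha> \<beta>))
   = expect n (\<lambda>w. h1 w * h2 w * h3 w)"
proof -
  have "(\<Sum>\<alpha>\<in>cube n. \<Sum>\<beta>\<in>cube n. fourier n h1 \<alpha> * fourier n h2 \<beta> * fourier n h3 (vadd \<alpha> \<beta>))
     = (\<Sum>\<alpha>\<in>cube n. fourier n h1 \<alpha> * fourier n (\<lambda>w. h2 w * h3 w) \<alpha>)"
  proof (intro sum.cong refl)
    fix \<alpha> assume a: "\<alpha> \<in> cube n"
    have "(\<Sum>\<beta>\<in>cube n. fourier n h2 \<beta> * fourier n h3 (vadd \<alpha> \<beta>))
        = (\<Sum>\<beta>\<in>cube n. fourier n h2 \<beta> * fourier n (\<lambda>w. h3 w * chr \<alpha> w) \<beta>)"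
      by (intro sum.cong refl) (simp add: fourier_shift a)
    also have "\<dots> = expect n (\<lambda>w. h2 w * (h3 w * chr \<alpha> w))" by (rule parseval)
    also have "\<dots> = fourier n (\<lambda>w. h2 w * h3 w) \<alpha>"
      by (simp add: fourier_chr mult_ac)
    finally show "(\<Sum>\<beta>\<in>cube n. fourier n h1 \<alpha> * fourier n h2 \<beta> * fourier n h3 (vadd \<alpha> \<beta>))
        = fourier n h1 \<alpha> * fourier n (\<lambda>w. h2 w * h3 w) \<alpha>"
      by (simp add: sum_distrib_left[symmetric] mult.assoc)
  qed
  also have "\<dots> = expect n (\<lambda>w. h1 w * h2 w * h3 w)"
    by (simp add: parseval mult_ac)
  finally show ?thesis .
qed

lemma cubic:
  "expect n (\<lambda>x. expect n (\<lambda>y. h x * h y * h (vadd x y))) = (\<Sum>\<gamma>\<in>cube n. fourier n h \<gamma> ^ 3)"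
proof -
  have "expect n (\<lambda>x. expect n (\<lambda>y. h x * h y * h (vadd x y)))
      = expect n (\<lambda>x. \<Sum>\<gamma>\<in>cube n. fourier n h \<gamma> ^ 2 * (h x * chr \<gamma> x))"
  proof (rule expect_cong)
    fix x assume x: "x \<in> cube n"
    have "expect n (\<lambda>y. h y * h (vadd y x)) = (\<Sum>\<gamma>\<in>cube n. fourier n h \<gamma> * fourier n (\<lambda>y. h (vadd y x)) \<gamma>)"
      by (simp add: parseval)
    also have "\<dots> = (\<Sum>\<gamma>\<in>cube n. fourier n h \<gamma> ^ 2 * chr \<gamma> x)"
      by (intro sum.cong refl) (simp add: fourier_translate x power2_eq_square)
    finally have e: "expect n (\<lambda>y. h y * h (vadd y x)) = (\<Sum>\<gamma>\<in>cube n. fourier n h \<gamma> ^ 2 * chr \<gamma> x)" .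
    have "expect n (\<lambda>y. h x * h y * h (vadd x y)) = h x * expect n (\<lambda>y. h y * h (vadd y x))"
      by (simp add: expect_cmult[symmetric] vadd_comm mult_ac)
    then show "expect n (\<lambda>y. h x * h y * h (vadd x y)) = (\<Sum>\<gamma>\<in>cube n. fourier n h \<gamma> ^ 2 * (h x * chr \<gamma> x))"
      by (simp add: e sum_distrib_left mult_ac)
  qed
  also have "\<dots> = (\<Sum>\<gamma>\<in>cube n. fourier n h \<gamma> ^ 2 * fourier n h \<gamma>)"
    by (simp add: expect_sum expect_cmult fourier_chr)
  also have "\<dots> = (\<Sum>\<gamma>\<in>cube n. fourier n h \<gamma> ^ 3)"
    by (simp add: power2_eq_square power3_eq_cube)
  finally show ?thesis .
qed

lemma quartic:
  "(\<Sum>\<gamma>\<in>cube n. fourier n g \<gamma> ^ 4)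
   = expect n (\<lambda>z. expect n (\<lambda>w. expect n (\<lambda>b. g z * g (vadd z w) * g (vadd z b) * g (vadd (vadd z b) w))))"
proof -
  have "(\<Sum>\<gamma>\<in>cube n. fourier n g \<gamma> ^ 4) = (\<Sum>\<gamma>\<in>cube n. fourier n (acorr n g) \<gamma> * fourier n (acorr n g) \<gamma>)"
    by (intro sum.cong refl) (metis fourier_sq power2_eq_square power_mult numeral_Bit0 mult_2_right numeral_One one_add_one)
  also have "\<dots> = expect n (\<lambda>w. acorr n g w * acorr n g w)" by (rule parseval)
  also have "\<dots> = expect n (\<lambda>w. expect n (\<lambda>z. expect n (\<lambda>b. g z * g (vadd z w) * g (vadd z b) * g (vadd (vadd z b) w))))"
  proof (rule expect_cong)
    fix w assume w: "w \<in> cube n"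
    have "acorr n g w * acorr n g w = expect n (\<lambda>z. g z * g (vadd z w) * acorr n g w)"
      by (simp add: acorr_def expect_multc)
    also have "\<dots> = expect n (\<lambda>z. expect n (\<lambda>b. g z * g (vadd z w) * g (vadd z b) * g (vadd (vadd z b) w)))"
    proof (rule expect_cong)
      fix z assume z: "z \<in> cube n"
      have "acorr n g w = expect n (\<lambda>b. g (vadd b z) * g (vadd (vadd b z) w))"
        unfolding acorr_def by (rule expect_translate[OF z, symmetric])
      also have "\<dots> = expect n (\<lambda>b. g (vadd z b) * g (vadd (vadd z b) w))"
        by (simp add: vadd_comm)
      finally show "g z * g (vadd z w) * acorr n g w = expect n (\<lambda>b. g z * g (vadd z w) * g (vadd z b) * g (vadd (vadd z b) w))"
        by (simp add: expect_cmult[symmetric] mult_ac)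
    qed
    finally show "acorr n g w * acorr n g w = expect n (\<lambda>z. expect n (\<lambda>b. g z * g (vadd z w) * g (vadd z b) * g (vadd (vadd z b) w)))" .
  qed
  also have "\<dots> = expect n (\<lambda>z. expect n (\<lambda>w. expect n (\<lambda>b. g z * g (vadd z w) * g (vadd z b) * g (vadd (vadd z b) w))))"
    by (rule expect_swap)
  finally show ?thesis .
qed

lemma parseval_sq: "(\<Sum>\<gamma>\<in>cube n. fourier n g \<gamma> ^ 2) = expect n (\<lambda>z. g z ^ 2)"
  using parseval[of n g g] by (simp add: power2_eq_square)



lemma wcs:
  fixes w x :: "'a \<Rightarrow> real"
  assumes fin: "finite A" and w: "\<And>i. i \<in> A \<Longrightarrow> w i \<ge> 0"
  shows "(\<Sum>i\<in>A. w i * x i)^2 \<le> (\<Sum>i\<in>A. w i) * (\<Sum>i\<in>A. w i * x i ^ 2)"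
proof -
  define a where "a = (\<Sum>i\<in>A. w i)"
  define b where "b = (\<Sum>i\<in>A. w i * x i)"
  define c where "c = (\<Sum>i\<in>A. w i * x i ^ 2)"
  have "0 \<le> (\<Sum>i\<in>A. \<Sum>j\<in>A. w i * w j * (x i - x j)^2)"
    by (intro sum_nonneg) (simp add: w)
  also have "\<dots> = (\<Sum>i\<in>A. \<Sum>j\<in>A. (w j * (w i * x i ^ 2) + w i * (w j * x j ^ 2)) - 2 * ((w i * x i) * (w j * x j)))"
    by (intro sum.cong refl) (simp add: power2_eq_square algebra_simps)
  also have "\<dots> = (\<Sum>i\<in>A. (\<Sum>j\<in>A. w j * (w i * x i ^ 2) + w i * (w j * x j ^ 2)) - 2 * ((w i * x i) * b))"
    by (simp only: sum_subtractf sum_distrib_left b_def mult.assoc)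
  also have "\<dots> = (\<Sum>i\<in>A. (a * (w i * x i ^ 2) + w i * c) - 2 * b * (w i * x i))"
    by (simp only: sum.distrib sum_distrib_left[symmetric] sum_distrib_right[symmetric] a_def c_def mult_ac)
  also have "\<dots> = 2 * (a * c) - 2 * b^2"
    by (simp only: sum_subtractf sum.distrib sum_distrib_left[symmetric] sum_distrib_right[symmetric] a_def[symmetric] c_def[symmetric] b_def[symmetric])
       (simp add: power2_eq_square algebra_simps)
  finally show ?thesis by (simp add: a_def b_def c_def)
qed

lemma expect_as_sum: "expect n g = (\<Sum>x\<in>cube n. (1 / 2 ^ n) * g x)"
  unfolding expect_def by (simp add: sum_divide_distrib)

lemma expect_sq_le: "(expect n g)^2 \<le> expect n (\<lambda>x. g x ^ 2)"
  using wcs[of "cube n" "\<lambda>_. 1 / 2 ^ n" g] unfolding expect_as_sum by simp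

lemma expect_mono: "(\<And>x. x \<in> cube n \<Longrightarrow> g x \<le> h x) \<Longrightarrow> expect n g \<le> expect n h"
  unfolding expect_def by (intro divide_right_mono sum_mono) auto

lemma expect_nonneg: "(\<And>x. x \<in> cube n \<Longrightarrow> 0 \<le> g x) \<Longrightarrow> 0 \<le> expect n g"
  using expect_mono[of n "\<lambda>_. 0" g] by (simp add: expect_def)

theorem corollary6p6:
  shows "\<forall>\<epsilon>::real. \<epsilon> > 0 \<longrightarrow> (\<exists>\<epsilon>'::real. \<epsilon>' > 0 \<and>
    (\<forall>(n::nat) (f::bool list \<Rightarrow> real).
       (\<forall>x\<in>cube n. f x \<in> {-1, 1}) \<and> u3norm n f \<ge> \<epsilon> \<longrightarrow>
       expect n (\<lambda>x. expect n (\<lambda>y.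
          \<Sum>\<alpha>\<in>cube n. \<Sum>\<beta>\<in>cube n.
            (fourier n (fder f x) \<alpha>)\<^sup>2 * (fourier n (fder f y) \<beta>)\<^sup>2
            * (fourier n (fder f (vadd x y)) (vadd \<alpha> \<beta>))\<^sup>2)) \<ge> \<epsilon>'))"
proof (intro allI impI)
  fix \<epsilon> :: real assume ep: "\<epsilon> > 0"
  show "\<exists>\<epsilon>'::real. \<epsilon>' > 0 \<and>
    (\<forall>(n::nat) (f::bool list \<Rightarrow> real).
       (\<forall>x\<in>cube n. f x \<in> {-1, 1}) \<and> u3norm n f \<ge> \<epsilon> \<longrightarrow>
       expect n (\<lambda>x. expect n (\<lambda>y.
          \<Sum>\<alpha>\<in>cube n. \<Sum>\<beta>\<in>cube n.
            (fourier n (fder f x) \<alpha>)\<^sup>2 * (fourier n (fder f y) \<beta>)\<^sup>2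
            * (fourier n (fder f (vadd x y)) (vadd \<alpha> \<beta>))\<^sup>2)) \<ge> \<epsilon>')"
  proof (intro exI conjI allI impI)
    show "\<epsilon> ^ 16 > 0" using ep by simp
    fix n :: nat and f :: "bool list \<Rightarrow> real"
    assume H: "(\<forall>x\<in>cube n. f x \<in> {-1, 1}) \<and> u3norm n f \<ge> \<epsilon>"
    define p where "p w \<gamma> = fourier n (fder f w) \<gamma> ^ 2" for w \<gamma>
    define X where "X w = (\<Sum>\<gamma>\<in>cube n. p w \<gamma> ^ 2)" for w
    define Y where "Y w = (\<Sum>\<gamma>\<in>cube n. p w \<gamma> ^ 3)" for w
    define S where "S = expect n (\<lambda>x. expect n (\<lambda>y1. expect n (\<lambda>y2. expect n (\<lambda>y3.
      f x * f (vadd x y1) * f (vadd x y2) * f (vadd x y3)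
      * f (vadd (vadd x y1) y2) * f (vadd (vadd x y1) y3) * f (vadd (vadd x y2) y3)
      * f (vadd (vadd (vadd x y1) y2) y3)))))"
    have u3: "u3norm n f = root 8 S" unfolding S_def u3norm_def by simp
    have SX: "S = expect n X"
    proof -
      have "S = expect n (\<lambda>y1. expect n (\<lambda>x. expect n (\<lambda>y2. expect n (\<lambda>y3.
      f x * f (vadd x y1) * f (vadd x y2) * f (vadd x y3)
      * f (vadd (vadd x y1) y2) * f (vadd (vadd x y1) y3) * f (vadd (vadd x y2) y3)
      * f (vadd (vadd (vadd x y1) y2) y3)))))"
        unfolding S_def by (rule expect_swap)
      also have "\<dots> = expect n X"
      proof (rule expect_cong)
        fix y1 assume "y1 \<in> cube n"
        have "X y1 = (\<Sum>\<gamma>\<in>cube n. fourier n (fder f y1) \<gamma> ^ 4)"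
          unfolding X_def p_def by (simp flip: power_mult)
        also have "\<dots> = expect n (\<lambda>z. expect n (\<lambda>w. expect n (\<lambda>b. fder f y1 z * fder f y1 (vadd z w)
            * fder f y1 (vadd z b) * fder f y1 (vadd (vadd z b) w))))"
          by (rule quartic)
        also have "\<dots> = expect n (\<lambda>x. expect n (\<lambda>y2. expect n (\<lambda>y3.
      f x * f (vadd x y1) * f (vadd x y2) * f (vadd x y3)
      * f (vadd (vadd x y1) y2) * f (vadd (vadd x y1) y3) * f (vadd (vadd x y2) y3)
      * f (vadd (vadd (vadd x y1) y2) y3))))"
          by (simp add: fder_def vadd_ac mult_ac)
        finally show "expect n (\<lambda>x. expect n (\<lambda>y2. expect n (\<lambda>y3.
      f x * f (vadd x y1) * f (vadd x y2) * f (vadd x y3)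
      * f (vadd (vadd x y1) y2) * f (vadd (vadd x y1) y3) * f (vadd (vadd x y2) y3)
      * f (vadd (vadd (vadd x y1) y2) y3)))) = X y1" by simp
      qed
      finally show ?thesis .
    qed
    have Xnn: "X w \<ge> 0" for w unfolding X_def by (intro sum_nonneg) simp
    have Snn: "S \<ge> 0" unfolding SX by (intro expect_nonneg Xnn)
    have S8: "\<epsilon> ^ 8 \<le> S"
    proof -
      have "\<epsilon> \<le> root 8 S" using H u3 by simp
      then have "\<epsilon> ^ 8 \<le> root 8 S ^ 8" using ep by (intro power_mono) auto
      also have "\<dots> = S" using Snn by (simp add: real_root_pow_pos2)
      finally show ?thesis .
    qed
    have LY: "expect n (\<lambda>x. expect n (\<lambda>y.
          \<Sum>\<alpha>\<in>cube n. \<Sum>\<beta>\<in>cube n.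
            (fourier n (fder f x) \<alpha>)\<^sup>2 * (fourier n (fder f y) \<beta>)\<^sup>2
            * (fourier n (fder f (vadd x y)) (vadd \<alpha> \<beta>))\<^sup>2)) = expect n Y"
    proof -
      define A where "A u = acorr n (fder f u)" for u
      have "expect n (\<lambda>x. expect n (\<lambda>y.
          \<Sum>\<alpha>\<in>cube n. \<Sum>\<beta>\<in>cube n.
            (fourier n (fder f x) \<alpha>)\<^sup>2 * (fourier n (fder f y) \<beta>)\<^sup>2
            * (fourier n (fder f (vadd x y)) (vadd \<alpha> \<beta>))\<^sup>2))
        = expect n (\<lambda>x. expect n (\<lambda>y. expect n (\<lambda>w. A x w * A y w * A (vadd x y) w)))"
        unfolding fourier_sq A_def triple by simp
      also have "\<dots> = expect n (\<lambda>x. expect n (\<lambda>w. expect n (\<lambda>y. A x w * A y w * A (vadd x y) w)))"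
        by (rule expect_cong, rule expect_swap)
      also have "\<dots> = expect n (\<lambda>w. expect n (\<lambda>x. expect n (\<lambda>y. A x w * A y w * A (vadd x y) w)))"
        by (rule expect_swap)
      also have "\<dots> = expect n (\<lambda>w. expect n (\<lambda>x. expect n (\<lambda>y.
            acorr n (fder f w) x * acorr n (fder f w) y * acorr n (fder f w) (vadd x y))))"
        by (simp add: A_def acorr_def fder_def vadd_ac mult_ac)
      also have "\<dots> = expect n Y"
        unfolding cubic Y_def p_def by (simp add: fourier_sq)
      finally show ?thesis .
    qed
    have psum: "(\<Sum>\<gamma>\<in>cube n. p w \<gamma>) = 1" if w: "w \<in> cube n" for w
    proof -
      have "(\<Sum>\<gamma>\<in>cube n. p w \<gamma>) = expect n (\<lambda>z. fder f w z ^ 2)"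
        unfolding p_def by (rule parseval_sq)
      also have "\<dots> = expect n (\<lambda>z. 1)"
      proof (rule expect_cong)
        fix z assume z: "z \<in> cube n"
        then have "vadd z w \<in> cube n" using w by auto
        then have "f z \<in> {-1,1}" "f (vadd z w) \<in> {-1,1}" using H z by auto
        then show "fder f w z ^ 2 = 1" unfolding fder_def by auto
      qed
      finally show ?thesis by (simp add: expect_one)
    qed
    have XY: "X w ^ 2 \<le> Y w" if w: "w \<in> cube n" for w
    proof -
      have "X w ^ 2 = (\<Sum>\<gamma>\<in>cube n. p w \<gamma> * p w \<gamma>)^2" unfolding X_def by (simp add: power2_eq_square)
      also have "\<dots> \<le> (\<Sum>\<gamma>\<in>cube n. p w \<gamma>) * (\<Sum>\<gamma>\<in>cube n. p w \<gamma> * p w \<gamma> ^ 2)"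
        by (rule wcs) (auto simp: p_def)
      also have "\<dots> = Y w" using psum[OF w] unfolding Y_def
        by (simp add: power2_eq_square power3_eq_cube mult_ac)
      finally show ?thesis .
    qed
    have "\<epsilon> ^ 16 = (\<epsilon> ^ 8) ^ 2" by simp
    also have "\<dots> \<le> S ^ 2" using S8 ep by (intro power_mono) auto
    also have "\<dots> = (expect n X) ^ 2" by (simp add: SX)
    also have "\<dots> \<le> expect n (\<lambda>w. X w ^ 2)" by (rule expect_sq_le)
    also have "\<dots> \<le> expect n Y" by (intro expect_mono XY)
    finally show "\<epsilon> ^ 16 \<le> expect n (\<lambda>x. expect n (\<lambda>y.
          \<Sum>\<alpha>\<in>cube n. \<Sum>\<beta>\<in>cube n.
            (fourier n (fder f x) \<alpha>)\<^sup>2 * (fourier n (fder f y) \<beta>)\<^sup>2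
            * (fourier n (fder f (vadd x y)) (vadd \<alpha> \<beta>))\<^sup>2))" using LY by simp
  qed
qed

end
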